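(* (a) For every threshold function $f$ it holds that $NN(f)=2$. (b) If $n$ is odd then $BNN(MAJ_n)=2$, and if $n$ is even then $BNN(MAJ_n)\le \frac n2+2$. (c) $BNN\left(TH_n^{\lfloor n/3\rfloor}\right)=2^{\Omega(n)}$.
   Context: For a Boolean function $f:\{0,1\}^n\to\{0,1\}$, points $a$ with $f(a)=1$ are positive and those with $f(a)=0$ negative. A nearest neighbor representation of $f$ is a pair of disjoint sets $(P,N)$ of points of $\mathbb R^n$ such that for every $a\in\{0,1\}^n$: if $a$ is positive, there is $b\in P$ with $d(a,b)<d(a,c)$ for all $c\in N$; if $a$ is negative, there is $b\in N$ with $d(a,b)<d(a,c)$ for all $c\in P$ ($d$ = Euclidean distance). Its size is $|P\cup N|$. $NN(f)$ is the minimum size of a nearest neighbor representation of $f$; $BNN(f)$ is the minimum size of one with $P\cup N\subseteq\{0,1\}^n$. A Boolean function $f$ is a threshold function if there are $w_1,\dots,w_n,t\in\mathbb R$ with $f(x)=1$ iff $w_1x_1+\dots+w_nx_n\ge t$ for all $x\in\{0,1\}^n$. $TH_n^t$ denotes the $n$-variable function with $TH_n^t(x)=1$ iff $x_1+\dots+x_n\ge t$, and $MAJ_n=TH_n^{n/2}$. In (c), $n\to\infty$. *)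

theory Defs
  imports Complex_Main
begin

text \<open>Points of R^n are functions nat => real vanishing outside {0..<n}.\<close>

definition euc :: "nat \<Rightarrow> (nat \<Rightarrow> real) set" where
  "euc n = {x. \<forall>i\<ge>n. x i = 0}"

definition cube :: "nat \<Rightarrow> (nat \<Rightarrow> real) set" where
  "cube n = {x. (\<forall>i<n. x i = 0 \<or> x i = 1) \<and> (\<forall>i\<ge>n. x i = 0)}"

definition edist :: "nat \<Rightarrow> (nat \<Rightarrow> real) \<Rightarrow> (nat \<Rightarrow> real) \<Rightarrow> real" where
  "edist n a b = sqrt (\<Sum>i<n. (a i - b i)^2)"

text \<open>A Boolean function on n variables: only its values on cube n matter.\<close>

definition nn_rep :: "nat \<Rightarrow> ((nat \<Rightarrow> real) \<Rightarrow> bool) \<Rightarrow> (nat \<Rightarrow> real) set \<Rightarrow> (nat \<Rightarrow> real) set \<Rightarrow> bool" where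
  "nn_rep n f P N \<longleftrightarrow>
     P \<subseteq> euc n \<and> N \<subseteq> euc n \<and> finite P \<and> finite N \<and> P \<inter> N = {} \<and>
     (\<forall>a\<in>cube n.
        (f a \<longrightarrow> (\<exists>b\<in>P. \<forall>c\<in>N. edist n a b < edist n a c)) \<and>
        (\<not> f a \<longrightarrow> (\<exists>b\<in>N. \<forall>c\<in>P. edist n a b < edist n a c)))"

definition NN :: "nat \<Rightarrow> ((nat \<Rightarrow> real) \<Rightarrow> bool) \<Rightarrow> nat" where
  "NN n f = (LEAST k. \<exists>P N. nn_rep n f P N \<and> card (P \<union> N) = k)"

definition BNN :: "nat \<Rightarrow> ((nat \<Rightarrow> real) \<Rightarrow> bool) \<Rightarrow> nat" where
  "BNN n f = (LEAST k. \<exists>P N. nn_rep n f P N \<and> P \<union> N \<subseteq> cube n \<and> card (P \<union> N) = k)"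

definition threshold_fun :: "nat \<Rightarrow> ((nat \<Rightarrow> real) \<Rightarrow> bool) \<Rightarrow> bool" where
  "threshold_fun n f \<longleftrightarrow>
     (\<exists>(w :: nat \<Rightarrow> real) (t :: real). \<forall>x\<in>cube n. f x \<longleftrightarrow> (\<Sum>i<n. w i * x i) \<ge> t)"

definition TH :: "nat \<Rightarrow> real \<Rightarrow> (nat \<Rightarrow> real) \<Rightarrow> bool" where
  "TH n t x \<longleftrightarrow> (\<Sum>i<n. x i) \<ge> t"

definition MAJ :: "nat \<Rightarrow> (nat \<Rightarrow> real) \<Rightarrow> bool" where
  "MAJ n = TH n (real n / 2)"

end

theory Submission
  imports Defs
begin


definition chi :: "nat set \<Rightarrow> nat \<Rightarrow> real" where
  "chi S = (\<lambda>i. if i \<in> S then 1 else 0)"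

definition supp :: "nat \<Rightarrow> (nat \<Rightarrow> real) \<Rightarrow> nat set" where
  "supp n x = {i. i < n \<and> x i = 1}"

definition sd :: "nat set \<Rightarrow> nat set \<Rightarrow> nat set" where
  "sd S T = (S - T) \<union> (T - S)"

lemma chi_supp: "x \<in> cube n \<Longrightarrow> chi (supp n x) = x"
  unfolding chi_def supp_def cube_def
  by (rule ext) (auto, metis not_le)

lemma supp_sub: "supp n x \<subseteq> {..<n}"
  unfolding supp_def by auto

lemma chi_cube: "S \<subseteq> {..<n} \<Longrightarrow> chi S \<in> cube n"
  unfolding chi_def cube_def by auto

lemma supp_chi: "S \<subseteq> {..<n} \<Longrightarrow> supp n (chi S) = S"
  unfolding chi_def supp_def by auto

lemma chi_inj: "inj chi"
proof (rule injI)
  fix S T assume "chi S = chi T"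
  then have "\<forall>i. (i \<in> S) = (i \<in> T)" unfolding chi_def by (metis one_neq_zero)
  then show "S = T" by auto
qed

lemma cube_eq: "cube n = chi ` Pow {..<n}"
proof
  show "cube n \<subseteq> chi ` Pow {..<n}"
  proof
    fix x assume "x \<in> cube n"
    then show "x \<in> chi ` Pow {..<n}" using chi_supp supp_sub
      by (metis PowI imageI)
  qed
  show "chi ` Pow {..<n} \<subseteq> cube n" using chi_cube by auto
qed

lemma finite_cube: "finite (cube n)"
  unfolding cube_eq by simp

lemma sum_chi: "S \<subseteq> {..<n} \<Longrightarrow> (\<Sum>i<n. chi S i) = real (card S)"
proof -
  assume S: "S \<subseteq> {..<n}"
  have "(\<Sum>i<n. chi S i) = (\<Sum>i\<in>{..<n}. if i \<in> S then 1 else 0)" unfolding chi_def by simp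
  also have "\<dots> = real (card ({..<n} \<inter> S))" by (simp add: sum.If_cases)
  also have "{..<n} \<inter> S = S" using S by auto
  finally show ?thesis .
qed

lemma edist_chi:
  assumes "S \<subseteq> {..<n}" "T \<subseteq> {..<n}"
  shows "edist n (chi S) (chi T) = sqrt (real (card (sd S T)))"
proof -
  have "(\<Sum>i<n. (chi S i - chi T i)^2) = (\<Sum>i\<in>{..<n}. if i \<in> sd S T then 1 else 0)"
    by (rule sum.cong) (auto simp: chi_def sd_def)
  also have "\<dots> = real (card ({..<n} \<inter> sd S T))" by (simp add: sum.If_cases)
  also have "{..<n} \<inter> sd S T = sd S T" using assms by (auto simp: sd_def)
  finally show ?thesis unfolding edist_def by simp
qed

lemma edist_chi_less:
  assumes "S \<subseteq> {..<n}" "T \<subseteq> {..<n}" "U \<subseteq> {..<n}"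
  shows "edist n (chi S) (chi T) < edist n (chi S) (chi U) \<longleftrightarrow> card (sd S T) < card (sd S U)"
  using assms by (simp add: edist_chi)


lemma rep_of_sets:
  assumes P: "P' \<subseteq> Pow {..<n}" and N: "N' \<subseteq> Pow {..<n}" and disj: "P' \<inter> N' = {}"
    and cov1: "\<And>S. S \<subseteq> {..<n} \<Longrightarrow> f (chi S) \<Longrightarrow> \<exists>B\<in>P'. \<forall>C\<in>N'. card (sd S B) < card (sd S C)"
    and cov2: "\<And>S. S \<subseteq> {..<n} \<Longrightarrow> \<not> f (chi S) \<Longrightarrow> \<exists>C\<in>N'. \<forall>B\<in>P'. card (sd S C) < card (sd S B)"
  shows "nn_rep n f (chi ` P') (chi ` N') \<and> chi ` P' \<union> chi ` N' \<subseteq> cube n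
         \<and> card (chi ` P' \<union> chi ` N') = card (P' \<union> N')"
proof -
  have fP: "finite P'" using P finite_subset by blast
  have fN: "finite N'" using N finite_subset by blast
  have sub: "chi ` P' \<union> chi ` N' \<subseteq> cube n" using P N chi_cube by blast
  have card: "card (chi ` P' \<union> chi ` N') = card (P' \<union> N')"
  proof -
    have "chi ` P' \<union> chi ` N' = chi ` (P' \<union> N')" by auto
    moreover have "inj_on chi (P' \<union> N')" using chi_inj inj_on_subset by blast
    ultimately show ?thesis by (simp add: card_image)
  qed
  have disj2: "chi ` P' \<inter> chi ` N' = {}" using disj injD[OF chi_inj] by blast
  have eu: "chi ` P' \<union> chi ` N' \<subseteq> euc n" using sub unfolding cube_def euc_def by auto
  have main: "\<forall>a\<in>cube n.
        (f a \<longrightarrow> (\<exists>b\<in>chi ` P'. \<forall>c\<in>chi ` N'. edist n a b < edist n a c)) \<and>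
        (\<not> f a \<longrightarrow> (\<exists>b\<in>chi ` N'. \<forall>c\<in>chi ` P'. edist n a b < edist n a c))"
  proof
    fix a assume a: "a \<in> cube n"
    define S where "S = supp n a"
    have S: "S \<subseteq> {..<n}" "a = chi S" using chi_supp[OF a] supp_sub S_def by auto
    show "(f a \<longrightarrow> (\<exists>b\<in>chi ` P'. \<forall>c\<in>chi ` N'. edist n a b < edist n a c)) \<and>
        (\<not> f a \<longrightarrow> (\<exists>b\<in>chi ` N'. \<forall>c\<in>chi ` P'. edist n a b < edist n a c))"
    proof (intro conjI impI)
      assume "f a"
      then obtain B where B: "B \<in> P'" "\<forall>C\<in>N'. card (sd S B) < card (sd S C)"
        using cov1[OF S(1)] S(2) by auto
      have "\<forall>c\<in>chi ` N'. edist n a (chi B) < edist n a c"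
      proof
        fix c assume "c \<in> chi ` N'"
        then obtain C where C: "C \<in> N'" "c = chi C" by auto
        show "edist n a (chi B) < edist n a c"
        proof -
          have bc: "B \<subseteq> {..<n}" "C \<subseteq> {..<n}" using B C P N by auto
          show ?thesis using edist_chi_less[OF S(1) bc] S B C by simp
        qed
      qed
      then show "\<exists>b\<in>chi ` P'. \<forall>c\<in>chi ` N'. edist n a b < edist n a c" using B(1) by auto
    next
      assume "\<not> f a"
      then obtain B where B: "B \<in> N'" "\<forall>C\<in>P'. card (sd S B) < card (sd S C)"
        using cov2[OF S(1)] S(2) by auto
      have "\<forall>c\<in>chi ` P'. edist n a (chi B) < edist n a c"
      proof
        fix c assume "c \<in> chi ` P'"
        then obtain C where C: "C \<in> P'" "c = chi C" by auto
        show "edist n a (chi B) < edist n a c"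
        proof -
          have bc: "B \<subseteq> {..<n}" "C \<subseteq> {..<n}" using B C P N by auto
          show ?thesis using edist_chi_less[OF S(1) bc] S B C by simp
        qed
      qed
      then show "\<exists>b\<in>chi ` N'. \<forall>c\<in>chi ` P'. edist n a b < edist n a c" using B(1) by auto
    qed
  qed
  have "nn_rep n f (chi ` P') (chi ` N')" unfolding nn_rep_def
  proof (intro conjI)
    show "chi ` P' \<subseteq> euc n" "chi ` N' \<subseteq> euc n" using eu by auto
    show "finite (chi ` P')" "finite (chi ` N')" using fP fN by auto
  qed (use disj2 main in blast)+
  then show ?thesis using sub card by blast
qed

lemma sets_of_rep:
  assumes rep: "nn_rep n f P N" and sub: "P \<union> N \<subseteq> cube n" and S: "S \<subseteq> {..<n}"
  shows "(f (chi S) \<longrightarrow> (\<exists>B\<in>supp n ` P. \<forall>C\<in>supp n ` N. card (sd S B) < card (sd S C)))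
       \<and> (\<not> f (chi S) \<longrightarrow> (\<exists>C\<in>supp n ` N. \<forall>B\<in>supp n ` P. card (sd S C) < card (sd S B)))"
proof -
  have a: "chi S \<in> cube n" using chi_cube[OF S] .
  have eq: "edist n (chi S) x < edist n (chi S) y \<longleftrightarrow> card (sd S (supp n x)) < card (sd S (supp n y))"
    if "x \<in> cube n" "y \<in> cube n" for x y
    using edist_chi_less[OF S supp_sub supp_sub, of x y] chi_supp that by simp
  show ?thesis
  proof (intro conjI impI)
    assume "f (chi S)"
    then obtain b where b: "b \<in> P" "\<forall>c\<in>N. edist n (chi S) b < edist n (chi S) c"
      using rep a unfolding nn_rep_def by blast
    have "\<forall>C\<in>supp n ` N. card (sd S (supp n b)) < card (sd S C)"
    proof
      fix C assume "C \<in> supp n ` N"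
      then obtain c where c: "c \<in> N" "C = supp n c" by blast
      show "card (sd S (supp n b)) < card (sd S C)" using eq[of b c] b c sub by blast
    qed
    then show "\<exists>B\<in>supp n ` P. \<forall>C\<in>supp n ` N. card (sd S B) < card (sd S C)"
      using b(1) by blast
  next
    assume "\<not> f (chi S)"
    then obtain b where b: "b \<in> N" "\<forall>c\<in>P. edist n (chi S) b < edist n (chi S) c"
      using rep a unfolding nn_rep_def by blast
    have "\<forall>C\<in>supp n ` P. card (sd S (supp n b)) < card (sd S C)"
    proof
      fix C assume "C \<in> supp n ` P"
      then obtain c where c: "c \<in> P" "C = supp n c" by blast
      show "card (sd S (supp n b)) < card (sd S C)" using eq[of b c] b c sub by blast
    qed
    then show "\<exists>C\<in>supp n ` N. \<forall>B\<in>supp n ` P. card (sd S C) < card (sd S B)"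
      using b(1) by blast
  qed
qed

lemma two_le:
  assumes rep: "nn_rep n f P N" and "a \<in> cube n" "f a" "a' \<in> cube n" "\<not> f a'"
  shows "2 \<le> card (P \<union> N)"
proof -
  have R: "\<forall>a\<in>cube n.
        (f a \<longrightarrow> (\<exists>b\<in>P. \<forall>c\<in>N. edist n a b < edist n a c)) \<and>
        (\<not> f a \<longrightarrow> (\<exists>b\<in>N. \<forall>c\<in>P. edist n a b < edist n a c))"
    and D: "P \<inter> N = {}" and F: "finite P" "finite N" using rep unfolding nn_rep_def by simp_all
  obtain p where p: "p \<in> P" using R assms(2,3) by fast
  obtain q where q: "q \<in> N" using R assms(4,5) by fast
  have "p \<noteq> q" using D p q by auto
  moreover have "finite (P \<union> N)" using F by simp
  moreover have "{p, q} \<subseteq> P \<union> N" using p q by blast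
  ultimately have "card {p, q} \<le> card (P \<union> N)" by (intro card_mono)
  then show ?thesis using \<open>p \<noteq> q\<close> by simp
qed

lemma sd_self: "card (sd S S) = 0" unfolding sd_def by simp

lemma sd_pos: "S \<subseteq> {..<n} \<Longrightarrow> C \<subseteq> {..<n} \<Longrightarrow> C \<noteq> S \<Longrightarrow> 0 < card (sd S C)"
proof -
  assume a: "S \<subseteq> {..<n}" "C \<subseteq> {..<n}" "C \<noteq> S"
  have "finite (sd S C)" using a unfolding sd_def by (meson finite_Un finite_Diff finite_lessThan finite_subset)
  moreover have "sd S C \<noteq> {}" using a unfolding sd_def by auto
  ultimately show ?thesis by auto
qed

lemma exists_brep: "\<exists>P N. nn_rep n f P N \<and> P \<union> N \<subseteq> cube n"
proof -
  define P' where "P' = {S\<in>Pow {..<n}. f (chi S)}"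
  define N' where "N' = {S\<in>Pow {..<n}. \<not> f (chi S)}"
  have "nn_rep n f (chi ` P') (chi ` N') \<and> chi ` P' \<union> chi ` N' \<subseteq> cube n
         \<and> card (chi ` P' \<union> chi ` N') = card (P' \<union> N')"
  proof (rule rep_of_sets)
    show "P' \<subseteq> Pow {..<n}" "N' \<subseteq> Pow {..<n}" "P' \<inter> N' = {}" unfolding P'_def N'_def by auto
  next
    fix S assume S: "S \<subseteq> {..<n}" "f (chi S)"
    then have "S \<in> P'" unfolding P'_def by auto
    moreover have "\<forall>C\<in>N'. card (sd S S) < card (sd S C)"
      using S sd_pos unfolding N'_def sd_self by auto
    ultimately show "\<exists>B\<in>P'. \<forall>C\<in>N'. card (sd S B) < card (sd S C)" by blast
  next
    fix S assume S: "S \<subseteq> {..<n}" "\<not> f (chi S)"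
    then have "S \<in> N'" unfolding N'_def by auto
    moreover have "\<forall>C\<in>P'. card (sd S S) < card (sd S C)"
      using S sd_pos unfolding P'_def sd_self by auto
    ultimately show "\<exists>B\<in>N'. \<forall>C\<in>P'. card (sd S B) < card (sd S C)" by blast
  qed
  then show ?thesis by blast
qed


lemma sd_flip_in:
  assumes "finite T" "finite X" "j \<notin> T" "j \<in> X"
  shows "card (sd (insert j T) X) + 1 = card (sd T X)"
proof -
  have "sd T X = insert j (sd (insert j T) X)" "j \<notin> sd (insert j T) X"
    using assms unfolding sd_def by auto
  moreover have "finite (sd (insert j T) X)" using assms unfolding sd_def by auto
  ultimately show ?thesis by simp
qed

lemma sd_flip_out:
  assumes "finite T" "finite X" "j \<notin> T" "j \<notin> X"
  shows "card (sd (insert j T) X) = card (sd T X) + 1"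
proof -
  have "sd (insert j T) X = insert j (sd T X)" "j \<notin> sd T X"
    using assms unfolding sd_def by auto
  moreover have "finite (sd T X)" using assms unfolding sd_def by auto
  ultimately show ?thesis by simp
qed

lemma sd_flip_le:
  assumes "finite T" "finite X" "j \<notin> T"
  shows "card (sd (insert j T) X) \<le> card (sd T X) + 1" "card (sd T X) \<le> card (sd (insert j T) X) + 1"
proof -
  show "card (sd (insert j T) X) \<le> card (sd T X) + 1"
    using sd_flip_in[OF assms] sd_flip_out[OF assms] by (cases "j \<in> X") auto
  show "card (sd T X) \<le> card (sd (insert j T) X) + 1"
    using sd_flip_in[OF assms] sd_flip_out[OF assms] by (cases "j \<in> X") auto
qed

lemma fin_sub: "X \<subseteq> {..<(n::nat)} \<Longrightarrow> finite X"
  using finite_subset[OF _ finite_lessThan] by blast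

lemma key:
  assumes P: "P' \<subseteq> Pow {..<n}" and N: "N' \<subseteq> Pow {..<n}" and k: "1 \<le> k"
    and cov1: "\<And>S. S \<subseteq> {..<n} \<Longrightarrow> k \<le> card S \<Longrightarrow> \<exists>B\<in>P'. \<forall>C\<in>N'. card (sd S B) < card (sd S C)"
    and cov2: "\<And>S. S \<subseteq> {..<n} \<Longrightarrow> card S < k \<Longrightarrow> \<exists>C\<in>N'. \<forall>B\<in>P'. card (sd S C) < card (sd S B)"
    and S: "S \<subseteq> {..<n}" and cS: "card S = k"
  shows "\<exists>B\<in>P'. S \<subseteq> B \<and> card B < 2 * k"
proof -
  have fS: "finite S" using fin_sub[OF S] .
  obtain B where B: "B \<in> P'" and hB: "\<forall>C\<in>N'. card (sd S B) < card (sd S C)"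
    using cov1[OF S] cS by auto
  have Bn: "B \<subseteq> {..<n}" using B P by auto
  have SB: "S \<subseteq> B"
  proof
    fix i assume i: "i \<in> S"
    show "i \<in> B"
    proof (rule ccontr)
      assume iB: "i \<notin> B"
      define T where "T = S - {i}"
      have T: "T \<subseteq> {..<n}" "card T < k" "S = insert i T" "i \<notin> T" "finite T"
        using S i cS fS k unfolding T_def by (auto simp: card_Diff_singleton)
      obtain C where C: "C \<in> N'" and hC: "\<forall>B'\<in>P'. card (sd T C) < card (sd T B')"
        using cov2[OF T(1,2)] by auto
      have Cn: "C \<subseteq> {..<n}" using C N by auto
      have "card (sd S B) = card (sd T B) + 1"
        using sd_flip_out[OF T(5) fin_sub[OF Bn] T(4) iB] T(3) by simp
      moreover have "card (sd S C) \<le> card (sd T C) + 1"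
        using sd_flip_le(1)[OF T(5) fin_sub[OF Cn] T(4)] T(3) by simp
      moreover have "card (sd S B) < card (sd S C)" using hB C by auto
      moreover have "card (sd T C) < card (sd T B)" using hC B by auto
      ultimately show False by linarith
    qed
  qed
  have "S \<noteq> {}" using cS k by auto
  then obtain i where i: "i \<in> S" by blast
  define T where "T = S - {i}"
  have T: "T \<subseteq> {..<n}" "card T < k" "S = insert i T" "i \<notin> T" "finite T" "card T + 1 = k"
    using S i cS fS k unfolding T_def by (auto simp: card_Diff_singleton)
  obtain C where C: "C \<in> N'" and hC: "\<forall>B'\<in>P'. card (sd T C) < card (sd T B')"
    using cov2[OF T(1,2)] by auto
  have Cn: "C \<subseteq> {..<n}" using C N by auto
  have CT: "C \<subseteq> T"
  proof
    fix j assume j: "j \<in> C"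
    show "j \<in> T"
    proof (rule ccontr)
      assume jT: "j \<notin> T"
      define U where "U = insert j T"
      have U: "U \<subseteq> {..<n}" "card U = k" using T Cn j jT unfolding U_def by auto
      obtain B2 where B2: "B2 \<in> P'" and hB2: "\<forall>C\<in>N'. card (sd U B2) < card (sd U C)"
        using cov1[OF U(1)] U(2) by auto
      have B2n: "B2 \<subseteq> {..<n}" using B2 P by auto
      have "card (sd U C) + 1 = card (sd T C)"
        using sd_flip_in[OF T(5) fin_sub[OF Cn] jT j] unfolding U_def by simp
      moreover have "card (sd T B2) \<le> card (sd U B2) + 1"
        using sd_flip_le(2)[OF T(5) fin_sub[OF B2n] jT] unfolding U_def by simp
      moreover have "card (sd U B2) < card (sd U C)" using hB2 C by auto
      moreover have "card (sd T C) < card (sd T B2)" using hC B2 by auto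
      ultimately show False by linarith
    qed
  qed
  have "sd S C \<subseteq> S" using CT T(3) unfolding sd_def by auto
  then have "card (sd S C) \<le> card S" using fS by (intro card_mono)
  then have "card (sd S C) \<le> k" using cS by simp
  moreover have "card (sd S B) < card (sd S C)" using hB C by blast
  ultimately have lt: "card (sd S B) < k" by linarith
  have "B \<subseteq> S \<union> sd S B" unfolding sd_def by auto
  then have "card B \<le> card (S \<union> sd S B)" using fS fin_sub[OF Bn] by (intro card_mono) (auto simp: sd_def)
  also have "\<dots> \<le> card S + card (sd S B)" by (rule card_Un_le)
  finally have "card B < 2 * k" using lt cS by linarith
  then show ?thesis using B SB by blast
qed


lemma choose_Suc_mult: "(n choose Suc t) * Suc t = (n choose t) * (n - t)"
  by (metis binomial_absorb_comp binomial_absorption mult.commute)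

lemma choose_mono_top: "a choose k \<le> (a + d) choose k"
proof (induction d)
  case 0 then show ?case by simp
next
  case (Suc d)
  have "(a + d) choose k \<le> (a + Suc d) choose k"
  proof (cases k)
    case 0 then show ?thesis by simp
  next
    case (Suc k') then show ?thesis by simp
  qed
  then show ?case using Suc by linarith
qed

lemma choose_mono_top': "a \<le> b \<Longrightarrow> a choose k \<le> b choose k"
  using choose_mono_top[of a k "b - a"] by simp

lemma choose_ratio: "m \<le> n \<Longrightarrow> (m choose t) * n ^ t \<le> (n choose t) * m ^ t"
proof (induction t)
  case 0 then show ?case by simp
next
  case (Suc t)
  have a: "(m - t) * n \<le> (n - t) * m" using Suc.prems
  proof (cases "t \<le> m")
    case True
    have "m * t \<le> n * t" using Suc.prems by simp
    then have "m * n - n * t \<le> m * n - m * t" by (rule diff_le_mono2)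
    moreover have "(m - t) * n = m * n - n * t" by (metis diff_mult_distrib mult.commute)
    moreover have "(n - t) * m = m * n - m * t" by (metis diff_mult_distrib mult.commute)
    ultimately show ?thesis by simp
  qed simp
  obtain d1 where d1: "d1 = m - t" by blast
  obtain d2 where d2: "d2 = n - t" by blast
  have "(m choose Suc t) * n ^ Suc t * Suc t = ((m choose Suc t) * Suc t) * (n ^ t * n)"
    by (simp only: power_Suc ac_simps)
  also have "\<dots> = ((m choose t) * d1) * (n ^ t * n)" using choose_Suc_mult[of m t] d1 by simp
  also have "\<dots> = ((m choose t) * n ^ t) * (d1 * n)" by (simp only: ac_simps)
  also have "\<dots> \<le> ((n choose t) * m ^ t) * (d2 * m)"
    using mult_mono[OF Suc.IH[OF Suc.prems] a] d1 d2 by simp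
  also have "\<dots> = ((n choose t) * d2) * (m ^ t * m)" by (simp only: ac_simps)
  also have "\<dots> = ((n choose Suc t) * Suc t) * (m ^ t * m)" using choose_Suc_mult[of n t] d2 by simp
  also have "\<dots> = (n choose Suc t) * m ^ Suc t * Suc t"
    by (simp only: power_Suc ac_simps)
  finally show ?case using mult_le_cancel2[of _ "Suc t"] by blast
qed

lemma count_cover:
  assumes fF: "finite F" and fin: "\<forall>B\<in>F. finite B"
    and cov: "\<forall>S\<in>A. \<exists>B\<in>F. S \<subseteq> B \<and> card B \<le> m" and A: "\<forall>S\<in>A. card S = k"
  shows "card A \<le> card F * (m choose k)"
proof -
  define F' where "F' = {B\<in>F. card B \<le> m}"
  have fF': "finite F'" using fF unfolding F'_def by simp
  have "A \<subseteq> (\<Union>B\<in>F'. {S. S \<subseteq> B \<and> card S = k})" using cov A unfolding F'_def by blast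
  moreover have "finite (\<Union>B\<in>F'. {S. S \<subseteq> B \<and> card S = k})"
    using fF' fin unfolding F'_def by auto
  ultimately have "card A \<le> card (\<Union>B\<in>F'. {S. S \<subseteq> B \<and> card S = k})" by (rule card_mono[rotated])
  also have "\<dots> \<le> (\<Sum>B\<in>F'. card {S. S \<subseteq> B \<and> card S = k})" by (rule card_UN_le[OF fF'])
  also have "\<dots> = (\<Sum>B\<in>F'. card B choose k)"
    by (rule sum.cong) (use fin n_subsets F'_def in auto)
  also have "\<dots> \<le> (\<Sum>B\<in>F'. m choose k)"
    by (rule sum_mono) (auto simp: F'_def intro: choose_mono_top')
  also have "\<dots> = card F' * (m choose k)" by simp
  also have "\<dots> \<le> card F * (m choose k)"
    using fF unfolding F'_def by (intro mult_right_mono card_mono) auto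
  finally show ?thesis .
qed


lemma TH_chi:
  assumes "S \<subseteq> {..<n}"
  shows "TH n (of_int \<lfloor>real n / 3\<rfloor>) (chi S) \<longleftrightarrow> n div 3 \<le> card S"
proof -
  have "\<lfloor>real n / 3\<rfloor> = int (n div 3)" using floor_divide_of_nat_eq[of n 3] by simp
  then show ?thesis unfolding TH_def using sum_chi[OF assms] by simp
qed

lemma part_c_card:
  assumes n3: "n \<ge> 3" and rep: "nn_rep n (TH n (of_int \<lfloor>real n / 3\<rfloor>)) P N"
    and sub: "P \<union> N \<subseteq> cube n"
  shows "(3/2) ^ (n div 3) \<le> real (card (P \<union> N))"
proof -
  define k where "k = n div 3"
  define f where "f = TH n (of_int \<lfloor>real n / 3\<rfloor>)"
  have k1: "1 \<le> k" and k3: "3 * k \<le> n" using n3 unfolding k_def by auto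
  define m where "m = 2 * k - 1"
  have m: "k \<le> m" "m \<le> n" "1 \<le> m" "3 * m \<le> 2 * n" using k1 k3 unfolding m_def by auto
  define P' where "P' = supp n ` P"
  define N' where "N' = supp n ` N"
  have P': "P' \<subseteq> Pow {..<n}" and N': "N' \<subseteq> Pow {..<n}" using supp_sub unfolding P'_def N'_def by auto
  have cov: "(f (chi S) \<longrightarrow> (\<exists>B\<in>P'. \<forall>C\<in>N'. card (sd S B) < card (sd S C)))
       \<and> (\<not> f (chi S) \<longrightarrow> (\<exists>C\<in>N'. \<forall>B\<in>P'. card (sd S C) < card (sd S B)))"
    if "S \<subseteq> {..<n}" for S
    using sets_of_rep[OF rep[folded f_def] sub that] unfolding P'_def N'_def .
  have fchi: "f (chi S) \<longleftrightarrow> k \<le> card S" if "S \<subseteq> {..<n}" for S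
    using TH_chi[OF that] unfolding f_def k_def .
  define A where "A = {S. S \<subseteq> {..<n} \<and> card S = k}"
  have cA: "card A = n choose k" using n_subsets[of "{..<n}" k] unfolding A_def by simp
  have covA: "\<forall>S\<in>A. \<exists>B\<in>P'. S \<subseteq> B \<and> card B \<le> m"
  proof
    fix S assume "S \<in> A"
    then have S: "S \<subseteq> {..<n}" "card S = k" unfolding A_def by auto
    have "\<exists>B\<in>P'. S \<subseteq> B \<and> card B < 2 * k"
    proof (rule key[OF P' N' k1 _ _ S])
      fix S' assume h: "S' \<subseteq> {..<n}" "k \<le> card S'"
      then have "f (chi S')" using fchi[OF h(1)] by simp
      then show "\<exists>B\<in>P'. \<forall>C\<in>N'. card (sd S' B) < card (sd S' C)" using cov[OF h(1)] by simp
    next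
      fix S' assume h: "S' \<subseteq> {..<n}" "card S' < k"
      then have "\<not> f (chi S')" using fchi[OF h(1)] by simp
      then show "\<exists>C\<in>N'. \<forall>B\<in>P'. card (sd S' C) < card (sd S' B)" using cov[OF h(1)] by simp
    qed
    then obtain B where "B \<in> P'" "S \<subseteq> B" "card B < 2 * k" by blast
    moreover then have "card B \<le> m" unfolding m_def by linarith
    ultimately show "\<exists>B\<in>P'. S \<subseteq> B \<and> card B \<le> m" by blast
  qed
  have fP: "finite P" using rep unfolding nn_rep_def by simp
  have fN: "finite N" using rep unfolding nn_rep_def by simp
  have "card A \<le> card P' * (m choose k)"
    by (rule count_cover) (use fP covA P' fin_sub in \<open>auto simp: P'_def A_def\<close>)
  also have "card P' \<le> card (P \<union> N)"
  proof -
    have "card P' \<le> card P" unfolding P'_def using fP by (rule card_image_le)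
    also have "card P \<le> card (P \<union> N)" using fP fN by (intro card_mono) auto
    finally show ?thesis .
  qed
  then have "card P' * (m choose k) \<le> card (P \<union> N) * (m choose k)" by simp
  finally have c1: "(n choose k) \<le> card (P \<union> N) * (m choose k)" using cA by simp
  have "(m choose k) * n ^ k \<le> (n choose k) * m ^ k" using choose_ratio[OF m(2)] .
  also have "\<dots> \<le> card (P \<union> N) * (m choose k) * m ^ k" using c1 by simp
  finally have "(m choose k) * n ^ k \<le> (m choose k) * (card (P \<union> N) * m ^ k)" by (simp add: ac_simps)
  moreover have "0 < m choose k" using m(1) by simp
  ultimately have c2: "n ^ k \<le> card (P \<union> N) * m ^ k" by simp
  have "(3 * m) ^ k \<le> (2 * n) ^ k" using m(4) by (rule power_mono) simp
  then have "3 ^ k * m ^ k \<le> 2 ^ k * n ^ k" by (simp add: power_mult_distrib)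
  also have "\<dots> \<le> 2 ^ k * (card (P \<union> N) * m ^ k)" using c2 by simp
  finally have "3 ^ k * m ^ k \<le> (2 ^ k * card (P \<union> N)) * m ^ k" by (simp add: ac_simps)
  moreover have "0 < m ^ k" using m(3) by simp
  ultimately have "3 ^ k \<le> 2 ^ k * card (P \<union> N)" using mult_le_cancel2 by blast
  then have "real (3 ^ k) \<le> real (2 ^ k * card (P \<union> N))" by linarith
  then have "(3::real) ^ k \<le> 2 ^ k * real (card (P \<union> N))" by simp
  then have "(3::real) ^ k / 2 ^ k \<le> real (card (P \<union> N))" by (simp add: field_simps)
  then show ?thesis unfolding k_def by (simp add: power_divide)
qed

lemma powr_bound:
  assumes "n \<ge> 3"
  shows "2 powr (1/18 * real n) \<le> (3/2) ^ (n div 3)"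
proof -
  define k where "k = n div 3"
  have "real n \<le> 9 * real k" using assms unfolding k_def by linarith
  then have "2 powr (1/18 * real n) \<le> 2 powr (real k * (1/2))" by (intro powr_mono) auto
  also have "\<dots> = (2 powr (1/2)) powr real k" by (simp add: powr_powr)
  also have "\<dots> = sqrt 2 ^ k" by (simp add: powr_half_sqrt powr_realpow)
  also have "\<dots> \<le> (3/2) ^ k"
  proof (rule power_mono)
    have "sqrt 2 \<le> sqrt ((3/2)^2)" by (intro real_sqrt_le_mono) (simp add: power2_eq_square)
    then show "sqrt 2 \<le> 3/2" by simp
  qed simp
  finally show ?thesis unfolding k_def .
qed




lemma maj_chi: "S \<subseteq> {..<n} \<Longrightarrow> MAJ n (chi S) \<longleftrightarrow> n \<le> 2 * card S"
proof -
  assume S: "S \<subseteq> {..<n}"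
  have "real n \<le> real (card S) * 2 \<longleftrightarrow> n \<le> 2 * card S" by linarith
  then show ?thesis unfolding MAJ_def TH_def using sum_chi[OF S] by simp
qed

lemma sd_U: "S \<subseteq> {..<n} \<Longrightarrow> card (sd S {..<n}) = n - card S"
proof -
  assume S: "S \<subseteq> {..<n}"
  have "sd S {..<n} = {..<n} - S" using S unfolding sd_def by auto
  then show ?thesis using S fin_sub[OF S] by (simp add: card_Diff_subset)
qed

lemma sd_empty: "card (sd S {}) = card S"
  unfolding sd_def by simp

lemma sd_Ui_in:
  assumes S: "S \<subseteq> {..<n}" and i: "i \<in> S"
  shows "card (sd S ({..<n} - {i})) = n - card S + 1"
proof -
  have "sd S ({..<n} - {i}) = insert i ({..<n} - S)" using S i unfolding sd_def by auto
  moreover have "i \<notin> {..<n} - S" using i by auto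
  ultimately show ?thesis using S fin_sub[OF S] by (simp add: card_Diff_subset)
qed

lemma sd_Ui_out:
  assumes S: "S \<subseteq> {..<n}" and i: "i \<notin> S" "i < n"
  shows "card (sd S ({..<n} - {i})) + 1 = n - card S"
proof -
  have e: "sd S ({..<n} - {i}) = ({..<n} - S) - {i}" using S i unfolding sd_def by blast
  have iin: "i \<in> {..<n} - S" using i by blast
  have f: "finite ({..<n} - S)" by simp
  have c: "card ({..<n} - S) = n - card S" using S fin_sub[OF S] by (simp add: card_Diff_subset)
  have "card (({..<n} - S) - {i}) = card ({..<n} - S) - 1" using iin by (simp add: card_Diff_singleton)
  moreover have "card ({..<n} - S) \<noteq> 0" using iin f by (metis card_0_eq empty_iff)
  ultimately show ?thesis using e c by arith
qed

lemma odd_rep: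
  assumes "odd n"
  shows "\<exists>P N. nn_rep n (MAJ n) P N \<and> P \<union> N \<subseteq> cube n \<and> card (P \<union> N) = 2"
proof -
  have "n \<noteq> 0" using odd_pos[OF assms] by simp
  then have n1: "{..<n} \<noteq> {}" by auto
  have "nn_rep n (MAJ n) (chi ` {{..<n}}) (chi ` {{}}) \<and> chi ` {{..<n}} \<union> chi ` {{}} \<subseteq> cube n
         \<and> card (chi ` {{..<n}} \<union> chi ` {{}}) = card ({{..<n}} \<union> {{}})"
  proof (rule rep_of_sets)
    show "{{..<n}} \<subseteq> Pow {..<n}" "{{}} \<subseteq> Pow {..<n}" "{{..<n}} \<inter> {{}} = {}" using n1 by auto
  next
    fix S assume S: "S \<subseteq> {..<n}" "MAJ n (chi S)"
    then have "n \<le> 2 * card S" using maj_chi by blast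
    then have "n < 2 * card S" using assms by presburger
    then show "\<exists>B\<in>{{..<n}}. \<forall>C\<in>{{}}. card (sd S B) < card (sd S C)"
      using sd_U[OF S(1)] sd_empty[of S] by simp
  next
    fix S assume S: "S \<subseteq> {..<n}" "\<not> MAJ n (chi S)"
    then have "2 * card S < n" using maj_chi by (meson not_le)
    then show "\<exists>C\<in>{{}}. \<forall>B\<in>{{..<n}}. card (sd S C) < card (sd S B)"
      using sd_U[OF S(1)] sd_empty[of S] by simp
  qed
  moreover have "card ({{..<n}} \<union> {{}}) = 2" using n1 by simp
  ultimately show ?thesis by metis
qed

lemma even_rep:
  assumes "even n"
  shows "\<exists>P N. nn_rep n (MAJ n) P N \<and> P \<union> N \<subseteq> cube n \<and> real (card (P \<union> N)) \<le> real n / 2 + 2"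
proof (cases "n = 0")
  case True
  have "nn_rep n (MAJ n) (chi ` {{}}) (chi ` {}) \<and> chi ` {{}} \<union> chi ` {} \<subseteq> cube n
         \<and> card (chi ` {{}} \<union> chi ` {}) = card ({{}} \<union> ({}::nat set set))"
  proof (rule rep_of_sets)
    fix S assume S: "S \<subseteq> {..<n}" "\<not> MAJ n (chi S)"
    then show "\<exists>C\<in>{}. \<forall>B\<in>{{}}. card (sd S C) < card (sd S B)" using True maj_chi by auto
  qed auto
  then show ?thesis by (intro exI[of _ "chi ` {{}}"] exI[of _ "chi ` {}"]) (simp add: True)
next
  case False
  define k where "k = n div 2"
  have nk: "n = 2 * k" "1 \<le> k" using assms False unfolding k_def by auto
  define P' where "P' = (\<lambda>i. {..<n} - {i}) ` {..k}"
  have P'sub: "P' \<subseteq> Pow {..<n}" unfolding P'_def by auto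
  have ne: "{} \<notin> P'"
  proof
    assume "{} \<in> P'"
    then obtain i where "i \<le> k" "{..<n} - {i} = {}" unfolding P'_def by auto
    moreover have "0 < n" "1 < n" using nk by auto
    ultimately have "0 \<in> {..<n} - {i} \<or> 1 \<in> {..<n} - {i}" by auto
    then show False using \<open>{..<n} - {i} = {}\<close> by blast
  qed
  have R: "nn_rep n (MAJ n) (chi ` P') (chi ` {{}}) \<and> chi ` P' \<union> chi ` {{}} \<subseteq> cube n
         \<and> card (chi ` P' \<union> chi ` {{}}) = card (P' \<union> {{}})"
  proof (rule rep_of_sets)
    show "P' \<subseteq> Pow {..<n}" "{{}} \<subseteq> Pow {..<n}" "P' \<inter> {{}} = {}" using P'sub ne by auto
  next
    fix S assume S: "S \<subseteq> {..<n}" "MAJ n (chi S)"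
    then have cS: "k \<le> card S" using maj_chi nk by auto
    show "\<exists>B\<in>P'. \<forall>C\<in>{{}}. card (sd S B) < card (sd S C)"
    proof (cases "\<exists>i\<le>k. i \<notin> S")
      case True
      then obtain i where i: "i \<le> k" "i \<notin> S" by blast
      have "i < n" using i nk by auto
      then have "card (sd S ({..<n} - {i})) + 1 = n - card S" using sd_Ui_out[OF S(1) i(2)] by simp
      then have "card (sd S ({..<n} - {i})) < card (sd S {})" using cS nk sd_empty[of S] by linarith
      moreover have "{..<n} - {i} \<in> P'" using i unfolding P'_def by blast
      ultimately show ?thesis by blast
    next
      case False
      then have "{..k} \<subseteq> S" by auto
      then have "card {..k} \<le> card S" using card_mono[OF fin_sub[OF S(1)]] by blast
      then have "k + 1 \<le> card S" by simp
      moreover have "0 \<in> S" using False by auto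
      ultimately have "card (sd S ({..<n} - {0})) < card (sd S {})"
        using sd_Ui_in[OF S(1)] sd_empty[of S] nk by simp
      moreover have "{..<n} - {0} \<in> P'" unfolding P'_def by blast
      ultimately show ?thesis by blast
    qed
  next
    fix S assume S: "S \<subseteq> {..<n}" "\<not> MAJ n (chi S)"
    then have cS: "card S + 1 \<le> k" using maj_chi nk by auto
    have "\<forall>B\<in>P'. card (sd S {}) < card (sd S B)"
    proof
      fix B assume "B \<in> P'"
      then obtain i where i: "i \<le> k" "B = {..<n} - {i}" unfolding P'_def by auto
      have "i < n" using i nk by auto
      show "card (sd S {}) < card (sd S B)"
      proof (cases "i \<in> S")
        case True
        then show ?thesis using sd_Ui_in[OF S(1) True] i sd_empty[of S] cS nk by simp
      next
        case False
        then show ?thesis using sd_Ui_out[OF S(1) False \<open>i < n\<close>] i sd_empty[of S] cS nk by simp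
      qed
    qed
    then show "\<exists>C\<in>{{}}. \<forall>B\<in>P'. card (sd S C) < card (sd S B)" by simp
  qed
  have "card (P' \<union> {{}}) \<le> k + 2"
  proof -
    have "card P' \<le> card {..k}" unfolding P'_def by (rule card_image_le) simp
    then have "card P' \<le> k + 1" by simp
    moreover have "card (P' \<union> {{}}) \<le> card P' + 1" using card_Un_le[of P' "{{}}"] by simp
    ultimately show ?thesis by simp
  qed
  moreover have "real (k + 2) = real n / 2 + 2" using nk by simp
  ultimately have "real (card (P' \<union> {{}})) \<le> real n / 2 + 2" by linarith
  then have "real (card (chi ` P' \<union> chi ` {{}})) \<le> real n / 2 + 2" using R by simp
  then show ?thesis using R by blast
qed


lemma alg_id: "((x::real) - (c + 1) * w)^2 - (x - (c - 1) * w)^2 = 4 * c * w^2 - 4 * (w * x)"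
  by (simp add: power2_eq_square algebra_simps)

lemma thr_rep:
  assumes thr: "threshold_fun n f" and a: "a \<in> cube n" "f a" and a': "a' \<in> cube n" "\<not> f a'"
  shows "\<exists>P N. nn_rep n f P N \<and> card (P \<union> N) = 2"
proof -
  obtain w t where wt: "\<forall>x\<in>cube n. f x \<longleftrightarrow> (\<Sum>i<n. w i * x i) \<ge> t"
    using thr unfolding threshold_fun_def by blast
  define L where "L x = (\<Sum>i<n. w i * x i)" for x :: "nat \<Rightarrow> real"
  define V where "V = L ` {x \<in> cube n. \<not> f x}"
  have fV: "finite V" unfolding V_def using finite_cube[of n] by simp
  have neV: "V \<noteq> {}" unfolding V_def using a' by blast
  define m where "m = Max V"
  have "m \<in> V" unfolding m_def using fV neV by simp
  then obtain x0 where x0: "x0 \<in> cube n" "\<not> f x0" "m = L x0" unfolding V_def by blast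
  have mt: "m < t" using wt x0 unfolding L_def by auto
  define t' where "t' = (m + t) / 2"
  have hp: "t' < L x" if "x \<in> cube n" "f x" for x
  proof -
    have "t \<le> L x" using wt that unfolding L_def by auto
    then show ?thesis using mt unfolding t'_def by simp
  qed
  have hn: "L x < t'" if "x \<in> cube n" "\<not> f x" for x
  proof -
    have "L x \<in> V" unfolding V_def using that by blast
    then have "L x \<le> m" unfolding m_def using fV by simp
    then show ?thesis using mt unfolding t'_def by simp
  qed
  define W where "W = (\<Sum>i<n. (w i)^2)"
  have W0: "W \<ge> 0" unfolding W_def by (simp add: sum_nonneg)
  have Wne: "W \<noteq> 0"
  proof
    assume "W = 0"
    then have "\<forall>i\<in>{..<n}. (w i)^2 = 0" unfolding W_def
      using sum_nonneg_eq_0_iff[of "{..<n}" "\<lambda>i. (w i)^2"] by simp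
    then have "\<forall>x. L x = 0" unfolding L_def by simp
    then show False using hp[OF a] hn[OF a'] by simp
  qed
  obtain j where j: "j < n" "w j \<noteq> 0"
  proof (rule ccontr)
    assume "\<not> thesis"
    then have "\<forall>i<n. w i = 0" using that by blast
    then have "W = 0" unfolding W_def by simp
    then show False using Wne by simp
  qed
  define c where "c = t' / W"
  have cW: "c * W = t'" unfolding c_def using Wne by simp
  define p where "p = (\<lambda>i. if i < n then (c + 1) * w i else 0)"
  define q where "q = (\<lambda>i. if i < n then (c - 1) * w i else 0)"
  have ident: "(\<Sum>i<n. (x i - p i)^2) - (\<Sum>i<n. (x i - q i)^2) = 4 * (t' - L x)" for x
  proof -
    have "(\<Sum>i<n. (x i - p i)^2) - (\<Sum>i<n. (x i - q i)^2) = (\<Sum>i<n. (x i - p i)^2 - (x i - q i)^2)"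
      by (simp add: sum_subtractf)
    also have "\<dots> = (\<Sum>i<n. 4 * c * (w i)^2 - 4 * (w i * x i))"
    proof (rule sum.cong)
      fix i assume "i \<in> {..<n}"
      then have "p i = (c + 1) * w i" "q i = (c - 1) * w i" unfolding p_def q_def by auto
      moreover have "(x i - (c + 1) * w i)^2 - (x i - (c - 1) * w i)^2 = 4 * c * (w i)^2 - 4 * (w i * x i)"
        by (rule alg_id)
      ultimately show "(x i - p i)^2 - (x i - q i)^2 = 4 * c * (w i)^2 - 4 * (w i * x i)" by simp
    qed simp
    also have "\<dots> = 4 * c * W - 4 * L x"
      unfolding W_def L_def by (simp add: sum_subtractf sum_distrib_left)
    finally show ?thesis using cW by (simp add: algebra_simps)
  qed
  have cmp1: "edist n x p < edist n x q" if "t' < L x" for x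
  proof -
    have "(\<Sum>i<n. (x i - p i)^2) - (\<Sum>i<n. (x i - q i)^2) < 0"
      unfolding ident[of x] using that by simp
    then have "(\<Sum>i<n. (x i - p i)^2) < (\<Sum>i<n. (x i - q i)^2)" by simp
    then show ?thesis unfolding edist_def by (rule real_sqrt_less_mono)
  qed
  have cmp2: "edist n x q < edist n x p" if "L x < t'" for x
  proof -
    have "(\<Sum>i<n. (x i - p i)^2) - (\<Sum>i<n. (x i - q i)^2) > 0"
      unfolding ident[of x] using that by simp
    then have "(\<Sum>i<n. (x i - q i)^2) < (\<Sum>i<n. (x i - p i)^2)" by simp
    then show ?thesis unfolding edist_def by (rule real_sqrt_less_mono)
  qed
  have pq: "p \<noteq> q"
  proof
    assume "p = q"
    then have "p j = q j" by simp
    then show False using j unfolding p_def q_def by (simp add: algebra_simps)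
  qed
  have "nn_rep n f {p} {q}" unfolding nn_rep_def
  proof (intro conjI ballI)
    show "{p} \<subseteq> euc n" "{q} \<subseteq> euc n" unfolding euc_def p_def q_def by auto
    show "finite {p}" "finite {q}" by auto
    show "{p} \<inter> {q} = {}" using pq by auto
  next
    fix x assume x: "x \<in> cube n"
    show "f x \<longrightarrow> (\<exists>b\<in>{p}. \<forall>c\<in>{q}. edist n x b < edist n x c)" using hp[OF x] cmp1 by blast
    show "\<not> f x \<longrightarrow> (\<exists>b\<in>{q}. \<forall>c\<in>{p}. edist n x b < edist n x c)" using hn[OF x] cmp2 by blast
  qed
  moreover have "card ({p} \<union> {q}) = 2" using pq by simp
  ultimately show ?thesis by blast
qed

theorem theorem2:
  shows "(\<forall>n f. threshold_fun n f \<and> (\<exists>a\<in>cube n. f a) \<and> (\<exists>a\<in>cube n. \<not> f a)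
              \<longrightarrow> NN n f = 2)
       \<and> (\<forall>n. odd n \<longrightarrow> BNN n (MAJ n) = 2)
       \<and> (\<forall>n. even n \<longrightarrow> real (BNN n (MAJ n)) \<le> real n / 2 + 2)
       \<and> (\<exists>c>0. \<exists>n0. \<forall>n\<ge>n0.
              real (BNN n (TH n (of_int \<lfloor>real n / 3\<rfloor>))) \<ge> 2 powr (c * real n))"
proof (intro conjI allI impI)
  fix n f assume h: "threshold_fun n f \<and> (\<exists>a\<in>cube n. f a) \<and> (\<exists>a\<in>cube n. \<not> f a)"
  then obtain a a' where a: "a \<in> cube n" "f a" "a' \<in> cube n" "\<not> f a'" by blast
  show "NN n f = 2" unfolding NN_def
  proof (rule Least_equality)
    show "\<exists>P N. nn_rep n f P N \<and> card (P \<union> N) = 2" using thr_rep[OF _ a] h by blast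
  next
    fix y assume "\<exists>P N. nn_rep n f P N \<and> card (P \<union> N) = y"
    then show "2 \<le> y" using two_le[OF _ a] by blast
  qed
next
  fix n :: nat assume n: "odd n"
  have n0: "0 < n" using odd_pos[OF n] .
  have pos: "chi {..<n} \<in> cube n" "MAJ n (chi {..<n})" using chi_cube[of "{..<n}" n] maj_chi[of "{..<n}" n] by auto
  have neg: "chi {} \<in> cube n" "\<not> MAJ n (chi {})" using chi_cube[of "{}" n] maj_chi[of "{}" n] n0 by auto
  show "BNN n (MAJ n) = 2" unfolding BNN_def
  proof (rule Least_equality)
    show "\<exists>P N. nn_rep n (MAJ n) P N \<and> P \<union> N \<subseteq> cube n \<and> card (P \<union> N) = 2" using odd_rep[OF n] .
  next
    fix y assume "\<exists>P N. nn_rep n (MAJ n) P N \<and> P \<union> N \<subseteq> cube n \<and> card (P \<union> N) = y"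
    then show "2 \<le> y" using two_le[OF _ pos neg] by blast
  qed
next
  fix n :: nat assume n: "even n"
  obtain P N where PN: "nn_rep n (MAJ n) P N" "P \<union> N \<subseteq> cube n" "real (card (P \<union> N)) \<le> real n / 2 + 2"
    using even_rep[OF n] by blast
  have "BNN n (MAJ n) \<le> card (P \<union> N)" unfolding BNN_def
    by (rule Least_le) (use PN in blast)
  then show "real (BNN n (MAJ n)) \<le> real n / 2 + 2" using PN(3) by linarith
next
  show "\<exists>c>0. \<exists>n0. \<forall>n\<ge>n0. real (BNN n (TH n (of_int \<lfloor>real n / 3\<rfloor>))) \<ge> 2 powr (c * real n)"
  proof (intro exI[of _ "1/18"] conjI exI[of _ "3::nat"] allI impI)
    fix n :: nat assume n3: "3 \<le> n"
    define f where "f = TH n (of_int \<lfloor>real n / 3\<rfloor>)"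
    have "\<exists>k P N. nn_rep n f P N \<and> P \<union> N \<subseteq> cube n \<and> card (P \<union> N) = k"
      using exists_brep[of n f] by blast
    then have "\<exists>P N. nn_rep n f P N \<and> P \<union> N \<subseteq> cube n \<and> card (P \<union> N) = BNN n f"
      unfolding BNN_def by (rule LeastI_ex)
    then obtain P N where PN: "nn_rep n f P N" "P \<union> N \<subseteq> cube n" "card (P \<union> N) = BNN n f" by blast
    have "(3/2) ^ (n div 3) \<le> real (BNN n f)"
      using part_c_card[OF n3 PN(1)[unfolded f_def] PN(2)] PN(3) by simp
    then show "2 powr (1/18 * real n) \<le> real (BNN n (TH n (of_int \<lfloor>real n / 3\<rfloor>)))"
      using powr_bound[OF n3] unfolding f_def by linarith
  qed simp
qed

end
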